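(* Let $(X,T)$ be a dynamical system with $\mathcal M_T(X)\neq\emptyset$. If $\mathcal M_T^e(X)$ is dense in $\mathcal M_T(X)$, then $T|_{C_M(T)}\colon C_M(T)\to C_M(T)$ is topologically transitive.
   Context: A dynamical system $(X,T)$ consists of a complete separable metric space $(X,\rho)$ and a continuous surjection $T\colon X\to X$. $\mathcal M_T(X)$ is the set of $T$-invariant Borel probability measures (weak$*$ topology), $\mathcal M_T^e(X)$ the ergodic ones. The measure center $C_M(T)$ is the complement of the union of all open sets $U$ with $\mu(U)=0$ for every $\mu\in\mathcal M_T(X)$; it is closed and $T$-invariant. A map $S\colon Y\to Y$ is topologically transitive if for every two nonempty open $U,V\subset Y$ there is $n>0$ with $U\cap S^{-n}V\ne\emptyset$. *)

theory Defs
  imports "HOL-Probability.Probability"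
begin

text \<open>A dynamical system: X is the whole type 'a (a Polish space, i.e. a complete
separable metric space), T a continuous surjection.\<close>

definition dyn_system :: "('a::polish_space \<Rightarrow> 'a) \<Rightarrow> bool" where
  "dyn_system T \<longleftrightarrow> continuous_on UNIV T \<and> surj T"

definition invariant_measures :: "('a::polish_space \<Rightarrow> 'a) \<Rightarrow> 'a measure set" where
  "invariant_measures T = {\<mu>. sets \<mu> = sets borel \<and> prob_space \<mu> \<and>
      (\<forall>A \<in> sets borel. emeasure \<mu> (T -` A) = emeasure \<mu> A)}"

definition ergodic_measures :: "('a::polish_space \<Rightarrow> 'a) \<Rightarrow> 'a measure set" where
  "ergodic_measures T = {\<mu> \<in> invariant_measures T.
      \<forall>A \<in> sets borel. T -` A = A \<longrightarrow> emeasure \<mu> A = 0 \<or> emeasure \<mu> A = 1}"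

definition bcont :: "('a::topological_space \<Rightarrow> real) \<Rightarrow> bool" where
  "bcont f \<longleftrightarrow> continuous_on UNIV f \<and> bounded (range f)"

text \<open>Density of a set N in a set M of probability measures for the weak* topology,
expressed via the standard neighbourhood base
{\<nu>. \<forall>i. |\<integral> f_i d\<nu> - \<integral> f_i d\<mu>| < \<epsilon>}, f_1..f_k bounded continuous.\<close>
definition weak_star_dense_in :: "'a::topological_space measure set \<Rightarrow> 'a measure set \<Rightarrow> bool" where
  "weak_star_dense_in N M \<longleftrightarrow>
     (\<forall>\<mu> \<in> M. \<forall>F :: ('a \<Rightarrow> real) set. \<forall>\<epsilon>::real.
        finite F \<longrightarrow> (\<forall>f \<in> F. bcont f) \<longrightarrow> \<epsilon> > 0 \<longrightarrow>
        (\<exists>\<nu> \<in> N. \<forall>f \<in> F. \<bar>integral\<^sup>L \<nu> f - integral\<^sup>L \<mu> f\<bar> < \<epsilon>))"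

definition measure_center :: "('a::polish_space \<Rightarrow> 'a) \<Rightarrow> 'a set" where
  "measure_center T = - \<Union>{U. open U \<and> (\<forall>\<mu> \<in> invariant_measures T. emeasure \<mu> U = 0)}"

definition top_transitive_on :: "'a::topological_space set \<Rightarrow> ('a \<Rightarrow> 'a) \<Rightarrow> bool" where
  "top_transitive_on Y S \<longleftrightarrow>
     (\<forall>U V. openin (top_of_set Y) U \<longrightarrow> openin (top_of_set Y) V \<longrightarrow> U \<noteq> {} \<longrightarrow> V \<noteq> {} \<longrightarrow>
        (\<exists>n>0. \<exists>x \<in> U. (S ^^ n) x \<in> V))"

end

theory Submission
  imports Defs
begin

lemma mix_exists:
  fixes T :: "'a::polish_space \<Rightarrow> 'a"
  assumes cT: "continuous_on UNIV T" and mu: "\<mu> \<in> invariant_measures T" and nu: "\<nu> \<in> invariant_measures T"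
  shows "\<exists>m \<in> invariant_measures T. \<forall>A \<in> sets borel.
           emeasure m A = (emeasure \<mu> A + emeasure \<nu> A) / 2"
proof -
  define f where "f A = (emeasure \<mu> A + emeasure \<nu> A) / 2" for A
  define m where "m = measure_of UNIV (sets borel) f"
  have smu: "sets \<mu> = sets borel" and snu: "sets \<nu> = sets borel"
    and pmu: "prob_space \<mu>" and pnu: "prob_space \<nu>"
    using mu nu by (auto simp: invariant_measures_def)
  have sa: "sigma_algebra UNIV (sets borel)"
    by (metis sets.sigma_algebra_axioms space_borel)
  have pos: "positive (sets borel) f"
    by (simp add: positive_def f_def)
  have ca: "countably_additive (sets borel) f"
    unfolding countably_additive_def
  proof (intro allI impI)
    fix A :: "nat \<Rightarrow> 'a set"
    assume A: "range A \<subseteq> sets borel" "disjoint_family A"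
    have "(\<Sum>i. f (A i)) = ((\<Sum>i. emeasure \<mu> (A i)) + (\<Sum>i. emeasure \<nu> (A i))) / 2"
      unfolding f_def ennreal_suminf_divide
      by (subst suminf_add) auto
    also have "\<dots> = f (\<Union>(range A))"
      unfolding f_def
      using A by (simp add: suminf_emeasure smu snu)
    finally show "(\<Sum>i. f (A i)) = f (\<Union>(range A))" .
  qed
  have em: "emeasure m A = f A" if "A \<in> sets borel" for A
    unfolding m_def by (rule emeasure_measure_of_sigma[OF sa pos ca that])
  have sm: "sets m = sets borel"
    unfolding m_def by (metis sets.sets_measure_of_eq space_borel)
  have spm: "space m = UNIV"
    using sm by (metis sets_eq_imp_space_eq space_borel)
  have "prob_space m"
  proof
    have "emeasure m UNIV = f UNIV" by (rule em) simp
    also have "\<dots> = 1"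
      using prob_space.emeasure_space_1[OF pmu] prob_space.emeasure_space_1[OF pnu]
        sets_eq_imp_space_eq[OF smu] sets_eq_imp_space_eq[OF snu]
      by (simp add: f_def)
    finally show "emeasure m (space m) = 1" by (simp add: spm)
  qed
  moreover have "\<forall>A \<in> sets borel. emeasure m (T -` A) = emeasure m A"
  proof
    fix A :: "'a set" assume A: "A \<in> sets borel"
    have TA: "T -` A \<in> sets borel"
      using measurable_sets_borel[OF borel_measurable_continuous_onI[OF cT] A] by simp
    have "emeasure m (T -` A) = f (T -` A)" by (rule em[OF TA])
    also have "\<dots> = f A"
      using mu nu A unfolding f_def invariant_measures_def by simp
    also have "\<dots> = emeasure m A" by (rule em[OF A, symmetric])
    finally show "emeasure m (T -` A) = emeasure m A" .
  qed
  ultimately have "m \<in> invariant_measures T"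
    using sm by (simp add: invariant_measures_def)
  then show ?thesis using em unfolding f_def by (intro bexI[of _ m]) auto
qed

lemma Tmeas:
  fixes T :: "'a::polish_space \<Rightarrow> 'a"
  assumes cT: "continuous_on UNIV T" and A: "A \<in> sets borel"
  shows "(T^^n) -` A \<in> sets borel"
proof -
  have "continuous_on UNIV (T^^n)"
  proof (induction n)
    case 0 then show ?case by (simp add: continuous_on_id)
    case (Suc n) then show ?case
      by (simp add: continuous_on_compose2[OF cT Suc] )
  qed
  then show ?thesis
    using measurable_sets_borel[OF borel_measurable_continuous_onI A] by simp
qed

lemma inv_iter:
  fixes T :: "'a::polish_space \<Rightarrow> 'a"
  assumes cT: "continuous_on UNIV T" and mu: "\<mu> \<in> invariant_measures T"
    and A: "A \<in> sets borel"
  shows "emeasure \<mu> ((T^^n) -` A) = emeasure \<mu> A"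
proof (induction n)
  case 0 then show ?case by simp
next
  case (Suc n)
  have "(T^^Suc n) -` A = T -` ((T^^n) -` A)"
    by (metis funpow_Suc_right vimage_comp)
  then have "emeasure \<mu> ((T^^Suc n) -` A) = emeasure \<mu> (T -` ((T^^n) -` A))"
    by (simp only:)
  also have "\<dots> = emeasure \<mu> ((T^^n) -` A)"
    using mu Tmeas[OF cT A, of n] by (simp add: invariant_measures_def)
  also have "\<dots> = emeasure \<mu> A" by (rule Suc.IH)
  finally show ?case .
qed

lemma bump:
  fixes U :: "'a::metric_space set"
  assumes "open U"
  shows "\<exists>f. bcont f \<and> (\<forall>x. 0 \<le> f x \<and> f x \<le> 1) \<and> (\<forall>x. f x \<noteq> 0 \<longleftrightarrow> x \<in> U)"
proof (cases "U = UNIV")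
  case True
  then show ?thesis
    by (intro exI[of _ "\<lambda>x. 1"]) (auto simp: bcont_def)
next
  case False
  define f where "f x = min 1 (infdist x (-U))" for x
  have "continuous_on UNIV f"
    unfolding f_def by (intro continuous_intros)
  moreover have "range f \<subseteq> {0..1}"
    by (auto simp: f_def infdist_nonneg)
  then have "bounded (range f)"
    by (metis bounded_closed_interval bounded_subset)
  moreover have "f x \<noteq> 0 \<longleftrightarrow> x \<in> U" for x
  proof
    assume "f x \<noteq> 0" then show "x \<in> U"
    proof (rule contrapos_np)
      assume "x \<notin> U" then have "infdist x (-U) = 0" by simp
      then show "f x = 0" by (simp add: f_def)
    qed
  next
    assume "x \<in> U"
    then have "infdist x (-U) > 0"
      using False assms by (intro infdist_pos_not_in_closed) auto
    then show "f x \<noteq> 0" by (simp add: f_def)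
  qed
  ultimately show ?thesis
    by (intro exI[of _ f]) (auto simp: bcont_def f_def infdist_nonneg)
qed

lemma int_pos:
  fixes \<mu> :: "'a::polish_space measure"
  assumes s: "sets \<mu> = sets borel" and p: "prob_space \<mu>"
    and f: "bcont f" "\<forall>x. 0 \<le> f x \<and> f x \<le> 1" "\<forall>x. f x \<noteq> 0 \<longleftrightarrow> x \<in> U"
    and U: "open U"
  shows "integral\<^sup>L \<mu> f > 0 \<longleftrightarrow> emeasure \<mu> U > 0"
proof -
  interpret prob_space \<mu> by fact
  have sp: "space \<mu> = UNIV" using s by (metis sets_eq_imp_space_eq space_borel)
  have fm: "f \<in> borel_measurable \<mu>"
    using borel_measurable_continuous_onI[of f] f(1) measurable_cong_sets[OF s refl]
    by (auto simp: bcont_def)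
  have int: "integrable \<mu> f"
    by (rule integrable_const_bound[where B=1]) (use f fm in auto)
  have ge: "integral\<^sup>L \<mu> f \<ge> 0" using f by (simp add: integral_nonneg_AE)
  have eq0: "integral\<^sup>L \<mu> f = 0 \<longleftrightarrow> (AE x in \<mu>. f x = 0)"
    by (rule integral_nonneg_eq_0_iff_AE[OF int]) (use f in simp)
  have gt: "integral\<^sup>L \<mu> f > 0 \<longleftrightarrow> integral\<^sup>L \<mu> f \<noteq> 0" using ge by linarith
  have fz: "\<And>x. f x = 0 \<longleftrightarrow> x \<notin> U" using f by blast
  have "U \<in> sets \<mu>" using s U by simp
  then have ae: "(AE x in \<mu>. x \<notin> U) \<longleftrightarrow> emeasure \<mu> U = 0"
    by (intro AE_iff_measurable[of U \<mu> "\<lambda>x. x \<notin> U"]) (auto simp: sp)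
  show ?thesis unfolding gt eq0 fz ae by (simp add: zero_less_iff_neq_zero)
qed

lemma center_null:
  fixes T :: "'a::polish_space \<Rightarrow> 'a"
  assumes rho: "\<rho> \<in> invariant_measures T"
  shows "- measure_center T \<in> null_sets \<rho>"
proof -
  define F where "F = {U. open U \<and> (\<forall>\<mu> \<in> invariant_measures T. emeasure \<mu> U = 0)}"
  have s: "sets \<rho> = sets borel" using rho by (simp add: invariant_measures_def)
  obtain F' where F': "F' \<subseteq> F" "countable F'" "\<Union>F' = \<Union>F"
    using Lindelof[of F] unfolding F_def by blast
  have "(\<Union>U\<in>F'. U) \<in> null_sets \<rho>"
  proof (rule null_sets_UN'[OF F'(2)])
    fix U assume "U \<in> F'"
    then have "open U" "emeasure \<rho> U = 0" using F'(1) rho by (auto simp: F_def)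
    then show "U \<in> null_sets \<rho>" using s by (simp add: null_sets_def)
  qed
  moreover have "- measure_center T = (\<Union>U\<in>F'. U)"
    using F'(3) by (simp add: measure_center_def F_def)
  ultimately show ?thesis by simp
qed

lemma ergodic_return:
  fixes T :: "'a::polish_space \<Rightarrow> 'a"
  assumes cT: "continuous_on UNIV T" and rho: "\<rho> \<in> ergodic_measures T"
    and U: "open U" and V: "open V"
    and pU: "emeasure \<rho> U > 0" and pV: "emeasure \<rho> V > 0"
  shows "\<exists>n>0. \<exists>x \<in> U \<inter> measure_center T. (T^^n) x \<in> V \<inter> measure_center T"
proof -
  let ?C = "measure_center T"
  have inv: "\<rho> \<in> invariant_measures T" using rho by (simp add: ergodic_measures_def)
  have s: "sets \<rho> = sets borel" and p: "prob_space \<rho>"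
    using inv by (auto simp: invariant_measures_def)
  interpret prob_space \<rho> by fact
  have sp: "space \<rho> = UNIV" using s by (metis sets_eq_imp_space_eq space_borel)
  have Vb: "V \<in> sets borel" using V by simp
  define B where "B k = (\<Union>n\<in>{k..}. (T^^n) -` V)" for k
  define A where "A = (\<Inter>k. B k)"
  have Bb: "B k \<in> sets borel" for k
    unfolding B_def using Tmeas[OF cT Vb] by (intro sets.countable_UN') auto
  have Ab: "A \<in> sets borel" unfolding A_def using Bb by auto
  have decB: "decseq B" unfolding decseq_def B_def
    by auto (meson atLeast_iff order_trans)
  have TB: "T -` B k = B (Suc k)" for k
  proof -
    have "T -` ((T^^n) -` V) = (T^^Suc n) -` V" for n
      by (metis funpow_Suc_right vimage_comp)
    then have "T -` B k = (\<Union>n\<in>{k..}. (T^^Suc n) -` V)"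
      unfolding B_def by (simp add: vimage_UN)
    also have "\<dots> = B (Suc k)"
      unfolding B_def
    proof (intro equalityI subsetI)
      fix x assume "x \<in> (\<Union>n\<in>{k..}. (T^^Suc n) -` V)"
      then obtain n where "n \<ge> k" "x \<in> (T^^Suc n) -` V" by blast
      then show "x \<in> (\<Union>n\<in>{Suc k..}. (T^^n) -` V)" by (intro UN_I[of "Suc n"]) auto
    next
      fix x assume "x \<in> (\<Union>n\<in>{Suc k..}. (T^^n) -` V)"
      then obtain n where n: "n \<ge> Suc k" "x \<in> (T^^n) -` V" by blast
      then obtain m where "n = Suc m" "m \<ge> k" by (metis Suc_le_D Suc_le_mono)
      then show "x \<in> (\<Union>n\<in>{k..}. (T^^Suc n) -` V)" using n(2) by blast
    qed
    finally show ?thesis .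
  qed
  have TA: "T -` A = A"
  proof -
    have "T -` A = (\<Inter>k. B (Suc k))" unfolding A_def by (simp only: vimage_INT TB)
    also have "\<dots> = A"
    proof (intro equalityI subsetI)
      fix x assume x: "x \<in> (\<Inter>k. B (Suc k))"
      have "x \<in> B k" for k using x decB by (auto simp: decseq_Suc_iff)
      then show "x \<in> A" unfolding A_def by blast
    next
      fix x assume "x \<in> A" then show "x \<in> (\<Inter>k. B (Suc k))" unfolding A_def by blast
    qed
    finally show ?thesis .
  qed
  have "emeasure \<rho> A = (INF k. emeasure \<rho> (B k))"
    unfolding A_def
    by (rule INF_emeasure_decseq[symmetric]) (use Bb s decB in auto)
  moreover have "emeasure \<rho> V \<le> emeasure \<rho> (B k)" for k
  proof -
    have "emeasure \<rho> V = emeasure \<rho> ((T^^k) -` V)" using inv_iter[OF cT inv Vb] by simp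
    also have "\<dots> \<le> emeasure \<rho> (B k)"
      by (rule emeasure_mono) (auto simp: s Bb, auto simp: B_def)
    finally show ?thesis .
  qed
  ultimately have "emeasure \<rho> V \<le> emeasure \<rho> A" by (simp add: le_INF_iff)
  then have "emeasure \<rho> A \<noteq> 0" using pV by auto
  moreover have "\<forall>A\<in>sets borel. T -` A = A \<longrightarrow> emeasure \<rho> A = 0 \<or> emeasure \<rho> A = 1"
    using rho by (simp add: ergodic_measures_def)
  ultimately have A1: "emeasure \<rho> A = 1" using Ab TA by blast
  have "prob A = 1" using A1 by (simp add: emeasure_eq_measure)
  then have aeA: "AE x in \<rho>. x \<in> A"
    using AE_in_set_eq_1[of A] Ab s by simp
  have oC: "open (- ?C)" unfolding measure_center_def double_compl
    by (intro open_Union) blast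
  then have Cb: "?C \<in> sets borel" by (metis borel_closed closed_def)
  define D where "D = (\<Inter>n. (T^^n) -` ?C)"
  have Db: "D \<in> sets borel" unfolding D_def using Tmeas[OF cT Cb] by auto
  have aeD': "AE x in \<rho>. \<forall>n. (T^^n) x \<in> ?C"
  proof (subst AE_all_countable, intro allI)
    fix n
    have nC: "- ?C \<in> null_sets \<rho>" by (rule center_null[OF inv])
    have cb: "- ?C \<in> sets borel" using oC by simp
    have "emeasure \<rho> ((T^^n) -` (- ?C)) = emeasure \<rho> (- ?C)"
      by (rule inv_iter[OF cT inv cb])
    also have "\<dots> = 0" using nC by (rule null_setsD1)
    finally have "(T^^n) -` (- ?C) \<in> null_sets \<rho>"
      using Tmeas[OF cT cb, of n] s by (simp add: null_sets_def)
    then show "AE x in \<rho>. (T^^n) x \<in> ?C"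
      by (rule AE_I') blast
  qed
  have aeD: "AE x in \<rho>. x \<in> D"
    by (rule eventually_mono[OF aeD']) (auto simp: D_def)
  have Ub: "U \<in> sets borel" using U by simp
  have "emeasure \<rho> U = emeasure \<rho> (U \<inter> A \<inter> D)"
  proof (rule emeasure_eq_AE)
    show "AE x in \<rho>. (x \<in> U) = (x \<in> U \<inter> A \<inter> D)"
      using aeA aeD by eventually_elim blast
    show "U \<in> sets \<rho>" using Ub s by simp
    show "U \<inter> A \<inter> D \<in> sets \<rho>" using Ub Ab Db s by simp
  qed
  then have "U \<inter> A \<inter> D \<noteq> {}" using pU by auto
  then obtain x where x: "x \<in> U" "x \<in> A" "x \<in> D" by blast
  then have "x \<in> B 1" unfolding A_def by blast
  then obtain n where n: "n \<ge> 1" "(T^^n) x \<in> V" unfolding B_def by auto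
  have "(T^^0) x \<in> ?C" "(T^^n) x \<in> ?C" using x(3) unfolding D_def by blast+
  then show ?thesis using n x(1) by (intro exI[of _ n]) auto
qed

lemma pos_some_inv:
  fixes T :: "'a::polish_space \<Rightarrow> 'a"
  assumes "open W" "measure_center T \<inter> W \<noteq> {}"
  shows "\<exists>\<mu> \<in> invariant_measures T. emeasure \<mu> W > 0"
proof (rule ccontr)
  assume "\<not> ?thesis"
  then have "\<forall>\<mu> \<in> invariant_measures T. emeasure \<mu> W = 0"
    by (simp add: zero_less_iff_neq_zero)
  then have "W \<subseteq> - measure_center T"
    using assms(1) unfolding measure_center_def by blast
  then show False using assms(2) by blast
qed

theorem proposition7p2:
  fixes T :: "'a::polish_space \<Rightarrow> 'a"
  assumes "dyn_system T"
    and "invariant_measures T \<noteq> {}"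
    and "weak_star_dense_in (ergodic_measures T) (invariant_measures T)"
  shows "top_transitive_on (measure_center T) T"
  unfolding top_transitive_on_def
proof (intro allI impI)
  let ?C = "measure_center T"
  have cT: "continuous_on UNIV T" using assms(1) by (simp add: dyn_system_def)
  fix U V
  assume oU: "openin (top_of_set ?C) U" and oV: "openin (top_of_set ?C) V"
    and ne: "U \<noteq> {}" "V \<noteq> {}"
  obtain U' where U': "open U'" "U = ?C \<inter> U'" using oU by (auto simp: openin_open)
  obtain V' where V': "open V'" "V = ?C \<inter> V'" using oV by (auto simp: openin_open)
  obtain \<mu> where mu: "\<mu> \<in> invariant_measures T" "emeasure \<mu> U' > 0"
    using pos_some_inv[OF U'(1)] U'(2) ne by blast
  obtain \<nu> where nu: "\<nu> \<in> invariant_measures T" "emeasure \<nu> V' > 0"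
    using pos_some_inv[OF V'(1)] V'(2) ne by blast
  obtain m where m: "m \<in> invariant_measures T"
    "\<forall>A \<in> sets borel. emeasure m A = (emeasure \<mu> A + emeasure \<nu> A) / 2"
    using mix_exists[OF cT mu(1) nu(1)] by blast
  have ms: "sets m = sets borel" "prob_space m" using m(1) by (auto simp: invariant_measures_def)
  have mU: "emeasure m U' > 0" using m(2) U'(1) mu(2)
    by (simp add: ennreal_zero_less_divide add_pos_nonneg add_nonneg_pos)
  have mV: "emeasure m V' > 0" using m(2) V'(1) nu(2)
    by (simp add: ennreal_zero_less_divide add_pos_nonneg add_nonneg_pos)
  obtain f where f: "bcont f" "\<forall>x. 0 \<le> f x \<and> f x \<le> 1" "\<forall>x. f x \<noteq> 0 \<longleftrightarrow> x \<in> U'"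
    using bump[OF U'(1)] by blast
  obtain g where g: "bcont g" "\<forall>x. 0 \<le> g x \<and> g x \<le> 1" "\<forall>x. g x \<noteq> 0 \<longleftrightarrow> x \<in> V'"
    using bump[OF V'(1)] by blast
  have fm: "integral\<^sup>L m f > 0" using int_pos[OF ms f U'(1)] mU by simp
  have gm: "integral\<^sup>L m g > 0" using int_pos[OF ms g V'(1)] mV by simp
  define \<epsilon> where "\<epsilon> = min (integral\<^sup>L m f) (integral\<^sup>L m g)"
  have "\<epsilon> > 0" using fm gm by (simp add: \<epsilon>_def)
  have dense: "\<And>\<mu>' F e. \<mu>' \<in> invariant_measures T \<Longrightarrow> finite F \<Longrightarrow> (\<forall>h\<in>F. bcont h) \<Longrightarrow> e > 0 \<Longrightarrow>
      \<exists>\<nu>'\<in>ergodic_measures T. \<forall>h\<in>F. \<bar>integral\<^sup>L \<nu>' h - integral\<^sup>L \<mu>' h\<bar> < e"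
    using assms(3) unfolding weak_star_dense_in_def by blast
  have "\<exists>\<nu>'\<in>ergodic_measures T. \<forall>h\<in>{f, g}. \<bar>integral\<^sup>L \<nu>' h - integral\<^sup>L m h\<bar> < \<epsilon>"
    by (rule dense[OF m(1)]) (use f(1) g(1) \<open>\<epsilon> > 0\<close> in auto)
  then obtain \<rho> where rho: "\<rho> \<in> ergodic_measures T"
    "\<forall>h \<in> {f, g}. \<bar>integral\<^sup>L \<rho> h - integral\<^sup>L m h\<bar> < \<epsilon>"
    by blast
  have rinv: "\<rho> \<in> invariant_measures T" using rho(1) by (simp add: ergodic_measures_def)
  have rs: "sets \<rho> = sets borel" "prob_space \<rho>" using rinv by (auto simp: invariant_measures_def)
  have "\<bar>integral\<^sup>L \<rho> f - integral\<^sup>L m f\<bar> < \<epsilon>" using rho(2) by blast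
  then have "integral\<^sup>L \<rho> f > 0" unfolding \<epsilon>_def by linarith
  then have rU: "emeasure \<rho> U' > 0" using int_pos[OF rs f U'(1)] by simp
  have "\<bar>integral\<^sup>L \<rho> g - integral\<^sup>L m g\<bar> < \<epsilon>" using rho(2) by blast
  then have "integral\<^sup>L \<rho> g > 0" unfolding \<epsilon>_def by linarith
  then have rV: "emeasure \<rho> V' > 0" using int_pos[OF rs g V'(1)] by simp
  obtain n x where "n > 0" "x \<in> U' \<inter> ?C" "(T^^n) x \<in> V' \<inter> ?C"
    using ergodic_return[OF cT rho(1) U'(1) V'(1) rU rV] by blast
  then show "\<exists>n>0. \<exists>x\<in>U. (T ^^ n) x \<in> V" using U'(2) V'(2) by blast
qed

end
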